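(* Let $T$ be a spherically homogeneous rooted tree, $G\le\mathrm{Aut}~T$ a branch group, and $H\le G$ a subgroup with finitely many conjugates in $G$. Then $\mathrm{Supp}(H)$ is a clopen subset of $\partial T$.
   Context: A spherically homogeneous rooted tree is a rooted tree in which all vertices at the same distance from the root have the same degree; $\mathcal{L}_n$ is the set of vertices at distance $n$ from the root. $\partial T$ is the set of infinite paths from the root, topologized by the cone sets $C_v$ (paths through $v$). For $H\le\mathrm{Aut}~T$, $\mathrm{Supp}(H)=\{\gamma\in\partial T\mid \gamma^h\ne\gamma \text{ for some } h\in H\}$. For $G\le\mathrm{Aut}~T$, $\mathrm{rist}_G(v)$ is the set of elements of $G$ fixing $v$ whose support lies in $C_v$, and $\mathrm{Rist}_G(n)=\prod_{v\in\mathcal{L}_n}\mathrm{rist}_G(v)$. $G$ is a branch group if it acts transitively on every level $\mathcal{L}_n$ and $\mathrm{Rist}_G(n)$ has finite index in $G$ for all $n\ge1$. *)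

theory Defs
  imports "HOL-Analysis.Abstract_Topology" "HOL-Algebra.Generated_Groups" "HOL-Algebra.Coset"
begin

text \<open>A spherically homogeneous rooted tree T is given by its branching sequence m
  (every vertex at level n has m n children, m n \<ge> 2).\<close>

definition level :: "(nat \<Rightarrow> nat) \<Rightarrow> nat \<Rightarrow> nat list set" where
  "level m n = {xs. length xs = n \<and> (\<forall>i<n. xs ! i < m i)}"

definition verts :: "(nat \<Rightarrow> nat) \<Rightarrow> nat list set" where
  "verts m = (\<Union>n. level m n)"

definition is_aut :: "(nat \<Rightarrow> nat) \<Rightarrow> (nat list \<Rightarrow> nat list) \<Rightarrow> bool" where
  "is_aut m g \<longleftrightarrow> bij_betw g (verts m) (verts m)
     \<and> (\<forall>xs\<in>verts m. length (g xs) = length xs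
                       \<and> (\<forall>k\<le>length xs. g (take k xs) = take k (g xs)))
     \<and> (\<forall>xs. xs \<notin> verts m \<longrightarrow> g xs = xs)"

definition aut_group :: "(nat \<Rightarrow> nat) \<Rightarrow> (nat list \<Rightarrow> nat list) monoid" where
  "aut_group m = \<lparr>carrier = {g. is_aut m g}, mult = (\<circ>), one = id\<rparr>"

definition bdry :: "(nat \<Rightarrow> nat) \<Rightarrow> (nat \<Rightarrow> nat) set" where
  "bdry m = {\<gamma>. \<forall>i. \<gamma> i < m i}"

definition pref :: "(nat \<Rightarrow> nat) \<Rightarrow> nat \<Rightarrow> nat list" where
  "pref \<gamma> n = map \<gamma> [0..<n]"

definition bd_act :: "(nat list \<Rightarrow> nat list) \<Rightarrow> (nat \<Rightarrow> nat) \<Rightarrow> (nat \<Rightarrow> nat)" where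
  "bd_act g \<gamma> = (\<lambda>i. g (pref \<gamma> (Suc i)) ! i)"

definition cone :: "(nat \<Rightarrow> nat) \<Rightarrow> nat list \<Rightarrow> (nat \<Rightarrow> nat) set" where
  "cone m v = {\<gamma> \<in> bdry m. pref \<gamma> (length v) = v}"

definition bdry_open :: "(nat \<Rightarrow> nat) \<Rightarrow> (nat \<Rightarrow> nat) set \<Rightarrow> bool" where
  "bdry_open m S \<longleftrightarrow> S \<subseteq> bdry m \<and> (\<forall>\<gamma>\<in>S. \<exists>v\<in>verts m. \<gamma> \<in> cone m v \<and> cone m v \<subseteq> S)"

definition bdry_top :: "(nat \<Rightarrow> nat) \<Rightarrow> (nat \<Rightarrow> nat) topology" where
  "bdry_top m = topology (bdry_open m)"


lemma pref_take: "k \<le> n \<Longrightarrow> take k (pref \<gamma> n) = pref \<gamma> k"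
  unfolding pref_def by (simp add: take_map)

lemma pref_in_verts: "\<gamma> \<in> bdry m \<Longrightarrow> pref \<gamma> n \<in> verts m"
  unfolding pref_def verts_def level_def bdry_def by auto

lemma cone_mono:
  assumes "\<gamma> \<in> cone m u" "length u \<le> n"
  shows "cone m (pref \<gamma> n) \<subseteq> cone m u"
proof
  fix \<delta> assume d: "\<delta> \<in> cone m (pref \<gamma> n)"
  then have "pref \<delta> n = pref \<gamma> n" by (simp add: cone_def pref_def)
  then have "take (length u) (pref \<delta> n) = take (length u) (pref \<gamma> n)" by simp
  then have "pref \<delta> (length u) = u" using assms by (simp add: pref_take cone_def)
  then show "\<delta> \<in> cone m u" using d by (simp add: cone_def)
qed

lemma self_in_cone: "\<gamma> \<in> bdry m \<Longrightarrow> \<gamma> \<in> cone m (pref \<gamma> n)"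
  unfolding cone_def pref_def by simp

lemma istopology_bdry_open: "istopology (bdry_open m)"
  unfolding istopology_def
proof (intro conjI allI impI)
  fix S T assume S: "bdry_open m S" and T: "bdry_open m T"
  show "bdry_open m (S \<inter> T)"
    unfolding bdry_open_def
  proof (intro conjI ballI)
    show "S \<inter> T \<subseteq> bdry m" using S by (auto simp: bdry_open_def)
    fix \<gamma> assume g: "\<gamma> \<in> S \<inter> T"
    then obtain u v where u: "\<gamma> \<in> cone m u" "cone m u \<subseteq> S" and v: "\<gamma> \<in> cone m v" "cone m v \<subseteq> T"
    proof -
      have "\<gamma> \<in> S" "\<gamma> \<in> T" using g by auto
      then have "\<exists>u\<in>verts m. \<gamma> \<in> cone m u \<and> cone m u \<subseteq> S" "\<exists>v\<in>verts m. \<gamma> \<in> cone m v \<and> cone m v \<subseteq> T"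
        using S T unfolding bdry_open_def by blast+
      then show ?thesis using that by blast
    qed
    have gb: "\<gamma> \<in> bdry m" using u by (simp add: cone_def)
    define n where "n = max (length u) (length v)"
    have c1: "cone m (pref \<gamma> n) \<subseteq> cone m u" by (rule cone_mono[OF u(1)]) (simp add: n_def)
    have c2: "cone m (pref \<gamma> n) \<subseteq> cone m v" by (rule cone_mono[OF v(1)]) (simp add: n_def)
    have "cone m (pref \<gamma> n) \<subseteq> S \<inter> T" using c1 c2 u(2) v(2) by blast
    moreover have "pref \<gamma> n \<in> verts m" by (rule pref_in_verts[OF gb])
    moreover have "\<gamma> \<in> cone m (pref \<gamma> n)" by (rule self_in_cone[OF gb])
    ultimately show "\<exists>w\<in>verts m. \<gamma> \<in> cone m w \<and> cone m w \<subseteq> S \<inter> T" by blast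
  qed
next
  fix K assume K: "\<forall>S\<in>K. bdry_open m S"
  show "bdry_open m (\<Union>K)" unfolding bdry_open_def
  proof (intro conjI ballI)
    show "\<Union>K \<subseteq> bdry m" using K unfolding bdry_open_def by blast
    fix \<gamma> assume "\<gamma> \<in> \<Union>K"
    then obtain S where S: "S \<in> K" "\<gamma> \<in> S" by blast
    then obtain v where "v \<in> verts m" "\<gamma> \<in> cone m v" "cone m v \<subseteq> S"
      using K unfolding bdry_open_def by blast
    then show "\<exists>v\<in>verts m. \<gamma> \<in> cone m v \<and> cone m v \<subseteq> \<Union>K" using S(1) by blast
  qed
qed

lemma openin_bdry_top: "openin (bdry_top m) S \<longleftrightarrow> bdry_open m S"
  unfolding bdry_top_def by (simp add: istopology_bdry_open)

definition Supp :: "(nat \<Rightarrow> nat) \<Rightarrow> (nat list \<Rightarrow> nat list) set \<Rightarrow> (nat \<Rightarrow> nat) set" where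
  "Supp m H = {\<gamma> \<in> bdry m. \<exists>h\<in>H. bd_act h \<gamma> \<noteq> \<gamma>}"

definition rist :: "(nat \<Rightarrow> nat) \<Rightarrow> (nat list \<Rightarrow> nat list) set \<Rightarrow> nat list \<Rightarrow> (nat list \<Rightarrow> nat list) set" where
  "rist m G v = {g \<in> G. g v = v \<and> Supp m {g} \<subseteq> cone m v}"

text \<open>Rist_G(n): the (internal) product of the rigid stabilisers of the level-n vertices,
  i.e. the subgroup they generate.\<close>

definition Rist :: "(nat \<Rightarrow> nat) \<Rightarrow> (nat list \<Rightarrow> nat list) set \<Rightarrow> nat \<Rightarrow> (nat list \<Rightarrow> nat list) set" where
  "Rist m G n = generate (aut_group m) (\<Union>v\<in>level m n. rist m G v)"

definition branch_group :: "(nat \<Rightarrow> nat) \<Rightarrow> (nat list \<Rightarrow> nat list) set \<Rightarrow> bool" where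
  "branch_group m G \<longleftrightarrow> subgroup G (aut_group m)
     \<and> (\<forall>n. \<forall>u\<in>level m n. \<forall>v\<in>level m n. \<exists>g\<in>G. g u = v)
     \<and> (\<forall>n\<ge>1. finite ((\<lambda>g. Rist m G n #>\<^bsub>aut_group m\<^esub> g) ` G))"

end

theory Submission
  imports Defs
begin

lemma verts_nth: "xs \<in> verts m \<Longrightarrow> i < length xs \<Longrightarrow> xs ! i < m i"
  unfolding verts_def level_def by auto

lemma verts_iff: "xs \<in> verts m \<longleftrightarrow> (\<forall>i<length xs. xs ! i < m i)"
  unfolding verts_def level_def by auto

lemma verts_level: "xs \<in> verts m \<Longrightarrow> xs \<in> level m (length xs)"
  unfolding verts_def level_def by auto

lemma take_verts: "xs \<in> verts m \<Longrightarrow> take k xs \<in> verts m"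
  unfolding verts_iff by auto

lemma pref_level: "\<gamma> \<in> bdry m \<Longrightarrow> pref \<gamma> n \<in> level m n"
  unfolding pref_def level_def bdry_def by auto

lemma length_pref[simp]: "length (pref \<gamma> n) = n"
  unfolding pref_def by simp

lemma pref_nth: "i < n \<Longrightarrow> pref \<gamma> n ! i = \<gamma> i"
  unfolding pref_def by simp

lemma aut_pref:
  assumes g: "is_aut m g" and b: "\<gamma> \<in> bdry m"
  shows "g (pref \<gamma> n) = pref (bd_act g \<gamma>) n"
proof -
  have pv: "pref \<gamma> n \<in> verts m" using pref_in_verts[OF b] .
  have len: "length (g (pref \<gamma> n)) = n" using g pv unfolding is_aut_def by auto
  show ?thesis
  proof (rule nth_equalityI)
    show "length (g (pref \<gamma> n)) = length (pref (bd_act g \<gamma>) n)" using len by simp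
    fix i assume "i < length (g (pref \<gamma> n))"
    then have i: "i < n" using len by simp
    have "g (pref \<gamma> n) ! i = take (Suc i) (g (pref \<gamma> n)) ! i" by simp
    also have "take (Suc i) (g (pref \<gamma> n)) = g (take (Suc i) (pref \<gamma> n))"
      using g pv i unfolding is_aut_def by auto
    also have "take (Suc i) (pref \<gamma> n) = pref \<gamma> (Suc i)" using i by (simp add: pref_take)
    finally show "g (pref \<gamma> n) ! i = pref (bd_act g \<gamma>) n ! i"
      using i by (simp add: pref_nth bd_act_def)
  qed
qed

lemma bd_act_bdry:
  assumes g: "is_aut m g" and b: "\<gamma> \<in> bdry m"
  shows "bd_act g \<gamma> \<in> bdry m"
  unfolding bdry_def
proof (rule CollectI, rule allI)
  fix i
  have pv: "pref \<gamma> (Suc i) \<in> verts m" using pref_in_verts[OF b] .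
  then have gv: "g (pref \<gamma> (Suc i)) \<in> verts m" and l: "length (g (pref \<gamma> (Suc i))) = Suc i"
    using g unfolding is_aut_def bij_betw_def by auto
  show "bd_act g \<gamma> i < m i" unfolding bd_act_def using verts_nth[OF gv] l by simp
qed

lemma bd_act_comp:
  assumes g: "is_aut m g" and h: "is_aut m h" and b: "\<gamma> \<in> bdry m"
  shows "bd_act (g \<circ> h) \<gamma> = bd_act g (bd_act h \<gamma>)"
  unfolding bd_act_def[of "g \<circ> h"] bd_act_def[of g] using aut_pref[OF h b] by simp

lemma bd_act_id: "bd_act id \<gamma> = \<gamma>"
  unfolding bd_act_def by (simp add: pref_nth)

lemma is_aut_comp:
  assumes g: "is_aut m g" and h: "is_aut m h"
  shows "is_aut m (g \<circ> h)"
  unfolding is_aut_def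
proof (intro conjI ballI allI impI)
  show "bij_betw (g \<circ> h) (verts m) (verts m)"
    using g h unfolding is_aut_def using bij_betw_trans by blast
  fix xs assume xs: "xs \<in> verts m"
  have hx: "h xs \<in> verts m" using h xs unfolding is_aut_def bij_betw_def by auto
  show "length ((g \<circ> h) xs) = length xs" using g h xs hx unfolding is_aut_def by auto
  fix k assume k: "k \<le> length xs"
  have "h (take k xs) = take k (h xs)" using h xs k unfolding is_aut_def by auto
  moreover have "g (take k (h xs)) = take k (g (h xs))"
    using g hx k h xs unfolding is_aut_def by auto
  ultimately show "(g \<circ> h) (take k xs) = take k ((g \<circ> h) xs)" by simp
next
  fix xs assume "xs \<notin> verts m"
  then show "(g \<circ> h) xs = xs" using g h unfolding is_aut_def by auto
qed

lemma is_aut_inv_ex: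
  assumes g: "is_aut m g"
  shows "\<exists>g'. is_aut m g' \<and> g' \<circ> g = id"
proof -
  define g' where "g' = (\<lambda>xs. if xs \<in> verts m then inv_into (verts m) g xs else xs)"
  have bij: "bij_betw g (verts m) (verts m)" using g unfolding is_aut_def by auto
  have gg: "\<And>xs. xs \<in> verts m \<Longrightarrow> g' xs \<in> verts m \<and> g (g' xs) = xs"
    unfolding g'_def using bij
    by (auto simp: bij_betw_def inv_into_into f_inv_into_f)
  have g'g: "g' \<circ> g = id"
  proof
    fix xs show "(g' \<circ> g) xs = id xs"
    proof (cases "xs \<in> verts m")
      case True
      then show ?thesis using bij unfolding g'_def bij_betw_def by (auto simp: inv_into_f_f)
    next
      case False
      then show ?thesis using g unfolding g'_def is_aut_def by auto
    qed
  qed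
  have "is_aut m g'"
    unfolding is_aut_def
  proof (intro conjI ballI allI impI)
    have "bij_betw (inv_into (verts m) g) (verts m) (verts m)"
      using bij bij_betw_inv_into by blast
    then show "bij_betw g' (verts m) (verts m)"
      by (rule bij_betw_cong[THEN iffD1, rotated]) (simp add: g'_def)
    fix xs assume xs: "xs \<in> verts m"
    obtain ys where ys: "ys = g' xs" by simp
    have yv: "ys \<in> verts m" and gy: "g ys = xs" using gg[OF xs] ys by auto
    show "length (g' xs) = length xs" using g yv gy ys unfolding is_aut_def by auto
    fix k assume k: "k \<le> length xs"
    have lk: "k \<le> length ys" using g yv gy k unfolding is_aut_def by auto
    have "take k xs = g (take k ys)" using g yv lk gy unfolding is_aut_def by auto
    then have "g' (take k xs) = (g' \<circ> g) (take k ys)" by simp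
    also have "\<dots> = take k ys" using g'g by simp
    finally show "g' (take k xs) = take k (g' xs)" using ys by simp
  next
    fix xs assume "xs \<notin> verts m" then show "g' xs = xs" unfolding g'_def by simp
  qed
  then show ?thesis using g'g by blast
qed

lemma is_aut_id: "is_aut m id"
  unfolding is_aut_def by (simp add: bij_betw_id)

lemma aut_group_is_group: "group (aut_group m)"
proof (rule groupI)
  show "\<And>x y. x \<in> carrier (aut_group m) \<Longrightarrow> y \<in> carrier (aut_group m) \<Longrightarrow>
      x \<otimes>\<^bsub>aut_group m\<^esub> y \<in> carrier (aut_group m)"
    unfolding aut_group_def by (simp add: is_aut_comp)
  show "\<one>\<^bsub>aut_group m\<^esub> \<in> carrier (aut_group m)"
    unfolding aut_group_def by (simp add: is_aut_id)
  show "\<And>x y z. x \<otimes>\<^bsub>aut_group m\<^esub> y \<otimes>\<^bsub>aut_group m\<^esub> z = x \<otimes>\<^bsub>aut_group m\<^esub> (y \<otimes>\<^bsub>aut_group m\<^esub> z)"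
    unfolding aut_group_def by (simp add: comp_assoc)
  show "\<And>x. \<one>\<^bsub>aut_group m\<^esub> \<otimes>\<^bsub>aut_group m\<^esub> x = x"
    unfolding aut_group_def by simp
  show "\<And>x. x \<in> carrier (aut_group m) \<Longrightarrow> \<exists>y\<in>carrier (aut_group m). y \<otimes>\<^bsub>aut_group m\<^esub> x = \<one>\<^bsub>aut_group m\<^esub>"
    unfolding aut_group_def using is_aut_inv_ex by simp
qed

lemma (in group) conj_aux:
  assumes "x \<in> carrier G" "y \<in> carrier G" "a \<in> carrier G" "b \<in> carrier G"
    and e: "x \<otimes> a \<otimes> inv x = y \<otimes> b \<otimes> inv y"
  shows "(inv y \<otimes> x) \<otimes> a \<otimes> inv (inv y \<otimes> x) = b"
proof -
  have "(inv y \<otimes> x) \<otimes> a \<otimes> inv (inv y \<otimes> x) = inv y \<otimes> (x \<otimes> a \<otimes> inv x) \<otimes> y"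
    using assms(1-4) by (simp add: inv_mult_group m_assoc)
  also have "\<dots> = inv y \<otimes> (y \<otimes> b \<otimes> inv y) \<otimes> y" using e by simp
  also have "\<dots> = b" using assms(1-4) by (simp add: m_assoc flip: m_assoc[of "inv y" y])
  finally show ?thesis .
qed

lemma top_bdry: "topspace (bdry_top m) = bdry m"
proof -
  have "bdry_open m (bdry m)"
    unfolding bdry_open_def
  proof (intro conjI ballI)
    fix \<gamma> assume g: "\<gamma> \<in> bdry m"
    have "[] \<in> verts m" unfolding verts_iff by simp
    moreover have "cone m [] = bdry m" unfolding cone_def pref_def by auto
    ultimately show "\<exists>v\<in>verts m. \<gamma> \<in> cone m v \<and> cone m v \<subseteq> bdry m" using g by auto
  qed simp
  then show ?thesis unfolding topspace_def openin_bdry_top bdry_open_def by blast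
qed

theorem proposition4p3:
  fixes m :: "nat \<Rightarrow> nat"
    and G H :: "(nat list \<Rightarrow> nat list) set"
  assumes "\<And>n. m n \<ge> 2"
    and "branch_group m G"
    and "subgroup H (aut_group m)" and "H \<subseteq> G"
    and "finite {(\<lambda>h. g \<otimes>\<^bsub>aut_group m\<^esub> h \<otimes>\<^bsub>aut_group m\<^esub> inv\<^bsub>aut_group m\<^esub> g) ` H | g. g \<in> G}"
  shows "openin (bdry_top m) (Supp m H) \<and> closedin (bdry_top m) (Supp m H)"
proof -
  interpret A: group "aut_group m" by (rule aut_group_is_group)
  have Gsub: "subgroup G (aut_group m)" using assms(2) unfolding branch_group_def by auto
  have trans: "\<And>n u v. u \<in> level m n \<Longrightarrow> v \<in> level m n \<Longrightarrow> \<exists>g\<in>G. g u = v"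
    using assms(2) unfolding branch_group_def by blast
  have GA: "\<And>g. g \<in> G \<Longrightarrow> g \<in> carrier (aut_group m)" using Gsub subgroup.subset by blast
  have HG: "\<And>h. h \<in> H \<Longrightarrow> h \<in> G" using assms(4) by blast
  have aut: "\<And>g. g \<in> carrier (aut_group m) \<Longrightarrow> is_aut m g" unfolding aut_group_def by simp
  have mult: "\<And>x y. x \<otimes>\<^bsub>aut_group m\<^esub> y = x \<circ> y" unfolding aut_group_def by simp
  have linv: "\<And>x. x \<in> carrier (aut_group m) \<Longrightarrow> inv\<^bsub>aut_group m\<^esub> x \<circ> x = id"
    using A.l_inv unfolding mult by (simp add: aut_group_def)
  have rinv: "\<And>x. x \<in> carrier (aut_group m) \<Longrightarrow> x \<circ> inv\<^bsub>aut_group m\<^esub> x = id"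
    using A.r_inv unfolding mult by (simp add: aut_group_def)
  let ?S = "Supp m H"
  have opn: "bdry_open m ?S"
    unfolding bdry_open_def
  proof (intro conjI ballI)
    show "?S \<subseteq> bdry m" unfolding Supp_def by auto
    fix \<gamma> assume "\<gamma> \<in> ?S"
    then obtain h where b: "\<gamma> \<in> bdry m" and h: "h \<in> H" and mv: "bd_act h \<gamma> \<noteq> \<gamma>"
      unfolding Supp_def by auto
    then obtain i where i: "bd_act h \<gamma> i \<noteq> \<gamma> i" by auto
    let ?v = "pref \<gamma> (Suc i)"
    have "cone m ?v \<subseteq> ?S"
    proof
      fix \<delta> assume d: "\<delta> \<in> cone m ?v"
      then have db: "\<delta> \<in> bdry m" and pd: "pref \<delta> (Suc i) = ?v" unfolding cone_def by auto
      have "bd_act h \<delta> i = bd_act h \<gamma> i" unfolding bd_act_def using pd by simp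
      moreover have "\<delta> i = \<gamma> i" using pd pref_nth[of i "Suc i" \<delta>] pref_nth[of i "Suc i" \<gamma>] by simp
      ultimately have "bd_act h \<delta> \<noteq> \<delta>" using i by metis
      then show "\<delta> \<in> ?S" unfolding Supp_def using db h by auto
    qed
    then show "\<exists>v\<in>verts m. \<gamma> \<in> cone m v \<and> cone m v \<subseteq> ?S"
      using pref_in_verts[OF b] self_in_cone[OF b] by blast
  qed
  let ?conj = "\<lambda>g. (\<lambda>h. g \<otimes>\<^bsub>aut_group m\<^esub> h \<otimes>\<^bsub>aut_group m\<^esub> inv\<^bsub>aut_group m\<^esub> g) ` H"
  have cls: "bdry_open m (bdry m - ?S)"
    unfolding bdry_open_def
  proof (intro conjI ballI)
    fix \<gamma> assume gS: "\<gamma> \<in> bdry m - ?S"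
    then have b: "\<gamma> \<in> bdry m" by simp
    show "\<exists>v\<in>verts m. \<gamma> \<in> cone m v \<and> cone m v \<subseteq> bdry m - ?S"
    proof (rule ccontr)
      assume na: "\<not> ?thesis"
      have meet: "\<And>n. \<exists>\<delta>\<in>?S. \<delta> \<in> cone m (pref \<gamma> n)"
      proof -
        fix n
        have "\<not> cone m (pref \<gamma> n) \<subseteq> bdry m - ?S"
          using na pref_in_verts[OF b] self_in_cone[OF b] by blast
        then show "\<exists>\<delta>\<in>?S. \<delta> \<in> cone m (pref \<gamma> n)" unfolding cone_def by blast
      qed
      define Psi where "Psi n = {?conj g | g. g \<in> G \<and> g (pref \<gamma> n) = pref \<gamma> n}" for n
      have Psub: "Psi n \<subseteq> {?conj g | g. g \<in> G}" for n unfolding Psi_def by blast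
      have Pfin: "finite (Psi n)" for n using finite_subset[OF Psub assms(5)] .
      have Pmono: "Psi n' \<subseteq> Psi n" if "n \<le> n'" for n n'
      proof
        fix X assume "X \<in> Psi n'"
        then obtain g where g: "g \<in> G" "g (pref \<gamma> n') = pref \<gamma> n'" "X = ?conj g"
          unfolding Psi_def by blast
        have ga: "is_aut m g" using aut GA g(1) by blast
        have "g (pref \<gamma> n) = g (take n (pref \<gamma> n'))" using that by (simp add: pref_take)
        also have "\<dots> = take n (g (pref \<gamma> n'))"
          using ga pref_in_verts[OF b] that unfolding is_aut_def by auto
        also have "\<dots> = pref \<gamma> n" using g(2) that by (simp add: pref_take)
        finally show "X \<in> Psi n" unfolding Psi_def using g by blast
      qed
      obtain m0 where m0: "\<forall>n. card (Psi m0) \<le> card (Psi n)"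
        using ex_has_least_nat[of "\<lambda>_. True" 0 "\<lambda>n. card (Psi n)"] by auto
      have Pstab: "Psi n = Psi m0" if "m0 \<le> n" for n
        using card_subset_eq[OF Pfin Pmono[OF that]] m0 Pmono[OF that] card_mono[OF Pfin Pmono[OF that]]
        by (meson le_antisym)
      obtain \<delta>0 where d0: "\<delta>0 \<in> ?S" "\<delta>0 \<in> cone m (pref \<gamma> m0)" using meet by blast
      obtain w' where w': "w' \<in> verts m" "\<delta>0 \<in> cone m w'" "cone m w' \<subseteq> ?S"
        using opn d0(1) unfolding bdry_open_def by blast
      define L where "L = max m0 (length w')"
      define w where "w = pref \<delta>0 L"
      have d0b: "\<delta>0 \<in> bdry m" using d0 unfolding cone_def by auto
      have cw: "cone m w \<subseteq> ?S" using cone_mono[OF w'(2), of L] w'(3) unfolding w_def L_def by auto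
      have wl: "w \<in> level m L" unfolding w_def using pref_level[OF d0b] .
      obtain g where g: "g \<in> G" "g w = pref \<gamma> L" using trans[OF wl pref_level[OF b]] by blast
      have ga: "is_aut m g" using aut GA g(1) by blast
      have tw: "take m0 w = pref \<gamma> m0"
        using d0(2) unfolding w_def L_def cone_def by (simp add: pref_take)
      have "g (pref \<gamma> m0) = g (take m0 w)" using tw by simp
      also have "\<dots> = take m0 (g w)"
        using ga pref_in_verts[OF d0b] unfolding is_aut_def w_def L_def by auto
      also have "\<dots> = pref \<gamma> m0" using g(2) unfolding L_def by (simp add: pref_take)
      finally have "?conj g \<in> Psi m0" unfolding Psi_def using g(1) by blast
      then have "?conj g \<in> Psi L" using Pstab[of L] unfolding L_def by simp
      then obtain g' where g': "g' \<in> G" "g' (pref \<gamma> L) = pref \<gamma> L" "?conj g' = ?conj g"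
        unfolding Psi_def by blast
      have g'c: "g' \<in> carrier (aut_group m)" and gc: "g \<in> carrier (aut_group m)"
        using GA g'(1) g(1) by auto
      define n where "n = inv\<^bsub>aut_group m\<^esub> g' \<otimes>\<^bsub>aut_group m\<^esub> g"
      have nc: "n \<in> carrier (aut_group m)" unfolding n_def using g'c gc by simp
      have inc: "inv\<^bsub>aut_group m\<^esub> n \<in> carrier (aut_group m)" using nc by simp
      have na': "is_aut m n" and ina: "is_aut m (inv\<^bsub>aut_group m\<^esub> n)" using aut nc inc by auto
      have "n w = (inv\<^bsub>aut_group m\<^esub> g') (g' (pref \<gamma> L))"
        unfolding n_def mult using g(2) g'(2) by simp
      also have "\<dots> = pref \<gamma> L" using fun_cong[OF linv[OF g'c]] by simp
      finally have nw: "n w = pref \<gamma> L" .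
      define \<delta> where "\<delta> = bd_act (inv\<^bsub>aut_group m\<^esub> n) \<gamma>"
      have db: "\<delta> \<in> bdry m" unfolding \<delta>_def using bd_act_bdry[OF ina b] .
      have "pref \<delta> L = (inv\<^bsub>aut_group m\<^esub> n) (pref \<gamma> L)" unfolding \<delta>_def using aut_pref[OF ina b] by simp
      also have "\<dots> = w" using nw fun_cong[OF linv[OF nc], of w] by simp
      finally have "\<delta> \<in> cone m w" using db wl unfolding cone_def level_def by simp
      then have "\<delta> \<in> ?S" using cw by blast
      then obtain h where h: "h \<in> H" "bd_act h \<delta> \<noteq> \<delta>" unfolding Supp_def by auto
      have hc: "h \<in> carrier (aut_group m)" using GA HG h(1) by blast
      have ha: "is_aut m h" using aut hc by blast
      have "g \<otimes>\<^bsub>aut_group m\<^esub> h \<otimes>\<^bsub>aut_group m\<^esub> inv\<^bsub>aut_group m\<^esub> g \<in> ?conj g'"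
        using g'(3) h(1) by blast
      then obtain h' where h': "h' \<in> H" "g \<otimes>\<^bsub>aut_group m\<^esub> h \<otimes>\<^bsub>aut_group m\<^esub> inv\<^bsub>aut_group m\<^esub> g
          = g' \<otimes>\<^bsub>aut_group m\<^esub> h' \<otimes>\<^bsub>aut_group m\<^esub> inv\<^bsub>aut_group m\<^esub> g'" by blast
      have h'c: "h' \<in> carrier (aut_group m)" using GA HG h'(1) by blast
      have ceq: "n \<otimes>\<^bsub>aut_group m\<^esub> h \<otimes>\<^bsub>aut_group m\<^esub> inv\<^bsub>aut_group m\<^esub> n = h'"
        unfolding n_def by (rule A.conj_aux[OF gc g'c hc h'c h'(2)])
      have bk: "bd_act (inv\<^bsub>aut_group m\<^esub> n) (bd_act n x) = x" if "x \<in> bdry m" for x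
        using bd_act_comp[OF ina na' that] linv[OF nc] bd_act_id by metis
      have gd: "bd_act n \<delta> = \<gamma>" unfolding \<delta>_def
        using bd_act_comp[OF na' ina b] rinv[OF nc] bd_act_id by metis
      have "bd_act h' \<gamma> = bd_act ((n \<circ> h) \<circ> inv\<^bsub>aut_group m\<^esub> n) \<gamma>"
        using ceq unfolding mult by simp
      also have "\<dots> = bd_act (n \<circ> h) \<delta>"
        unfolding \<delta>_def using bd_act_comp[OF is_aut_comp[OF na' ha] ina b] .
      also have "\<dots> = bd_act n (bd_act h \<delta>)" using bd_act_comp[OF na' ha db] .
      finally have e1: "bd_act h' \<gamma> = bd_act n (bd_act h \<delta>)" .
      have "bd_act h' \<gamma> \<noteq> \<gamma>"
      proof
        assume "bd_act h' \<gamma> = \<gamma>"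
        then have "bd_act n (bd_act h \<delta>) = bd_act n \<delta>" using e1 gd by simp
        then have "bd_act h \<delta> = \<delta>" using bk[OF bd_act_bdry[OF ha db]] bk[OF db] by metis
        then show False using h(2) by simp
      qed
      then have "\<gamma> \<in> ?S" unfolding Supp_def using b h'(1) by blast
      then show False using gS by simp
    qed
  qed auto
  show ?thesis
    unfolding closedin_def openin_bdry_top top_bdry using opn cls by (auto simp: Supp_def)
qed

end
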